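(* Let $0<\beta_2,\beta_3<1$ with $\gamma=\beta_2+\beta_3-1>0$, let $a_2\ne a_3$ be complex numbers, and for $\mu\in\mathbf{C}$ with $0<|\mu|<1$ let $$\omega_{F,\mu}=\gamma^2|w-\mu a_2|^{2\beta_2-2}|w-\mu a_3|^{2\beta_3-2}\,i\,dw\wedge d\bar w$$ on $\mathbf{C}$. Then the distance function of $\omega_{F,\mu}$ converges uniformly on compact sets to the distance function of $\mathbf{C}_\gamma$ (i.e. of $\gamma^2|w|^{2\gamma-2}i\,dw\wedge d\bar w$) as $\mu\to0$. More precisely, for every compact $K\subset\mathbf{C}$ there is $C>0$ such that $$|d_{\omega_{F,\mu}}(p,q)-d_{\mathbf{C}_\gamma}(p,q)|\le C|\mu|^\gamma$$ for all $p,q\in K$ and all $0<|\mu|<1$. *)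

theory Defs
  imports "HOL-Analysis.Analysis"
begin

text \<open>Length of a piecewise C1 path g on [0,1] in the conformal metric with
  density rho, i.e. the metric rho(w) |dw|^2 (the form rho i dw wedge dw-bar up to
  a fixed constant factor).\<close>
definition conf_length :: "(complex \<Rightarrow> real) \<Rightarrow> (real \<Rightarrow> complex) \<Rightarrow> ennreal" where
  "conf_length rho g =
     (\<integral>\<^sup>+ t. ennreal (sqrt (rho (g t)) * norm (vector_derivative g (at t))) * indicator {0..1} t \<partial>lborel)"

definition conf_dist :: "(complex \<Rightarrow> real) \<Rightarrow> complex \<Rightarrow> complex \<Rightarrow> ennreal" where
  "conf_dist rho p q =
     (INF g \<in> {g. valid_path g \<and> pathstart g = p \<and> pathfinish g = q}. conf_length rho g)"

definition omegaF_density :: "real \<Rightarrow> real \<Rightarrow> complex \<Rightarrow> complex \<Rightarrow> complex \<Rightarrow> complex \<Rightarrow> real" where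
  "omegaF_density \<beta>2 \<beta>3 a2 a3 \<mu> w =
     (\<beta>2 + \<beta>3 - 1)\<^sup>2 * norm (w - \<mu> * a2) powr (2 * \<beta>2 - 2) * norm (w - \<mu> * a3) powr (2 * \<beta>3 - 2)"

definition cone_density :: "real \<Rightarrow> complex \<Rightarrow> real" where
  "cone_density \<gamma> w = \<gamma>\<^sup>2 * norm w powr (2 * \<gamma> - 2)"

end

theory Submission
  imports Defs
begin


lemma valid_path_meas:
  fixes g :: "real \<Rightarrow> complex"
  assumes "valid_path g"
  obtains G D N where "G \<in> borel_measurable borel" "D \<in> borel_measurable borel"
    "\<And>t. t\<in>{0..1} \<Longrightarrow> G t = g t" "finite N"
    "\<And>t. t \<in> {0..1} - N \<Longrightarrow> vector_derivative g (at t) = D t"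
    "\<And>t. t \<in> {0..1} - N \<Longrightarrow> g differentiable (at t)"
proof -
  from assms obtain N where N: "finite N" "g C1_differentiable_on ({0..1} - N)"
    and cg: "continuous_on {0..1} g"
    unfolding valid_path_def piecewise_C1_differentiable_on_def by blast
  then have dif: "\<And>t. t \<in> {0..1} - N \<Longrightarrow> g differentiable (at t)"
    and cd: "continuous_on ({0..1} - N) (\<lambda>x. vector_derivative g (at x))"
    by (auto simp: C1_differentiable_on_eq)
  define D where "D = (\<lambda>t. indicator ({0..1} - N) t *\<^sub>R vector_derivative g (at t))"
  have Dm: "D \<in> borel_measurable borel"
    unfolding D_def
    by (rule borel_measurable_continuous_on_indicator[OF _ cd])
       (use N(1) in \<open>auto intro!: sets.Diff simp: borel_closed finite_imp_closed\<close>)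
  define G where "G = (\<lambda>t. g (max 0 (min 1 t)))"
  have "continuous_on UNIV G"
    unfolding G_def
    by (rule continuous_on_compose2[OF cg]) (auto intro!: continuous_intros)
  then have Gm: "G \<in> borel_measurable borel"
    by (rule borel_measurable_continuous_onI)
  show ?thesis
    by (rule that[OF Gm Dm _ N(1) _ dif]) (auto simp: G_def D_def)
qed

definition Ls :: "(complex \<Rightarrow> real) \<Rightarrow> (real \<Rightarrow> complex) \<Rightarrow> real set \<Rightarrow> ennreal" where
  "Ls rho g S = (\<integral>\<^sup>+ t. ennreal (sqrt (rho (g t)) * norm (vector_derivative g (at t))) * indicator S t \<partial>lborel)"

lemma conf_length_Ls: "conf_length rho g = Ls rho g {0..1}"
  by (simp add: conf_length_def Ls_def)

lemma AE_not_in_finite: "finite N \<Longrightarrow> AE t in lborel. t \<notin> (N :: real set)"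
  by (intro AE_not_in finite_imp_null_set_lborel)

lemma AE_neq_real: "AE t in lborel. t \<noteq> (a::real)"
  using AE_not_in_finite[of "{a}"] by simp

lemma Ls_cong_AE: "(AE t in lborel. t \<in> S \<longleftrightarrow> t \<in> T) \<Longrightarrow> Ls rho g S = Ls rho g T"
  unfolding Ls_def by (rule nn_integral_cong_AE) (auto simp: indicator_def)

lemma Ls_mono: "S \<subseteq> T \<Longrightarrow> Ls rho g S \<le> Ls rho g T"
  unfolding Ls_def by (intro nn_integral_mono mult_left_mono) (auto simp: indicator_def)

lemma Ls_meas:
  fixes g :: "real \<Rightarrow> complex"
  assumes g: "valid_path g" and rho: "rho \<in> borel_measurable borel"
  obtains F G where "F \<in> borel_measurable borel" "G \<in> borel_measurable borel"
    "\<And>t. t\<in>{0..1} \<Longrightarrow> G t = g t"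
    "\<And>S. S \<subseteq> {0..1} \<Longrightarrow> AE t in lborel. ennreal (sqrt (rho (g t)) * norm (vector_derivative g (at t))) * indicator S t = F t * indicator S t"
proof -
  obtain G D N where GD: "G \<in> borel_measurable borel" "D \<in> borel_measurable borel"
    "\<And>t. t\<in>{0..1} \<Longrightarrow> G t = g t" "finite N"
    "\<And>t. t \<in> {0..1} - N \<Longrightarrow> vector_derivative g (at t) = D t"
    using valid_path_meas[OF g] by metis
  note [measurable] = GD(1) GD(2) rho
  define F where "F t = ennreal (sqrt (rho (G t)) * norm (D t))" for t
  have Fm: "F \<in> borel_measurable borel" unfolding F_def by measurable
  show ?thesis
  proof (rule that[OF Fm GD(1) GD(3)])
    fix S :: "real set" assume S: "S \<subseteq> {0..1}"
    show "AE t in lborel. ennreal (sqrt (rho (g t)) * norm (vector_derivative g (at t))) * indicator S t = F t * indicator S t"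
      using AE_not_in_finite[OF GD(4)]
      by eventually_elim (use S GD in \<open>auto simp: F_def indicator_def\<close>)
  qed
qed

lemma Ls_union:
  fixes g :: "real \<Rightarrow> complex"
  assumes g: "valid_path g" and rho: "rho \<in> borel_measurable borel"
    and S: "S \<in> sets borel" "S \<subseteq> {0..1}" and T: "T \<in> sets borel" "T \<subseteq> {0..1}" and d: "S \<inter> T = {}"
  shows "Ls rho g (S \<union> T) = Ls rho g S + Ls rho g T"
proof -
  obtain F G where FG: "F \<in> borel_measurable borel" "G \<in> borel_measurable borel"
    "\<And>t. t\<in>{0..1} \<Longrightarrow> G t = g t"
    "\<And>S. S \<subseteq> {0..1} \<Longrightarrow> AE t in lborel. ennreal (sqrt (rho (g t)) * norm (vector_derivative g (at t))) * indicator S t = F t * indicator S t"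
    using Ls_meas[OF g rho] by blast
  note [measurable] = FG(1) S(1) T(1)
  have LF: "Ls rho g U = (\<integral>\<^sup>+t. F t * indicator U t \<partial>lborel)" if "U \<subseteq> {0..1}" for U
    unfolding Ls_def by (rule nn_integral_cong_AE) (rule FG(4)[OF that])
  have "Ls rho g (S \<union> T) = (\<integral>\<^sup>+t. F t * indicator (S \<union> T) t \<partial>lborel)"
    by (rule LF) (use S T in auto)
  also have "\<dots> = (\<integral>\<^sup>+t. F t * indicator S t + F t * indicator T t \<partial>lborel)"
    by (rule nn_integral_cong) (use d in \<open>auto simp: indicator_def\<close>)
  also have "\<dots> = (\<integral>\<^sup>+t. F t * indicator S t \<partial>lborel) + (\<integral>\<^sup>+t. F t * indicator T t \<partial>lborel)"
    by (rule nn_integral_add) measurable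
  also have "\<dots> = Ls rho g S + Ls rho g T"
    using LF[OF S(2)] LF[OF T(2)] by simp
  finally show ?thesis .
qed

lemma Ls_split3:
  fixes g :: "real \<Rightarrow> complex"
  assumes g: "valid_path g" and rho: "rho \<in> borel_measurable borel"
    and ab: "0 \<le> a" "a \<le> b" "b \<le> 1"
  shows "Ls rho g {0..1} = Ls rho g {0..a} + Ls rho g {a..b} + Ls rho g {b..1}"
proof -
  have e1: "Ls rho g {0..a} = Ls rho g {0..<a}"
    by (rule Ls_cong_AE) (use AE_neq_real[of a] in \<open>eventually_elim, auto\<close>)
  have e2: "Ls rho g {a..b} = Ls rho g {a..<b}"
    by (rule Ls_cong_AE) (use AE_neq_real[of b] in \<open>eventually_elim, auto\<close>)
  have "Ls rho g {0..1} = Ls rho g ({0..<a} \<union> {a..<b} \<union> {b..1})"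
    using ab by (intro arg_cong[where f="Ls rho g"]) auto
  also have "\<dots> = Ls rho g ({0..<a} \<union> {a..<b}) + Ls rho g {b..1}"
    by (rule Ls_union[OF g rho]) (use ab in auto)
  also have "Ls rho g ({0..<a} \<union> {a..<b}) = Ls rho g {0..<a} + Ls rho g {a..<b}"
    by (rule Ls_union[OF g rho]) (use ab in auto)
  finally show ?thesis using e1 e2 by simp
qed



lemma conf_length_subpath:
  fixes g :: "real \<Rightarrow> complex"
  assumes g: "valid_path g" and rho: "rho \<in> borel_measurable borel" "\<And>w. 0 \<le> rho w"
    and ab: "0 \<le> a" "a \<le> b" "b \<le> 1"
  shows "conf_length rho (subpath a b g) = Ls rho g {a..b}"
proof (cases "a = b")
  case True
  have "conf_length rho (subpath a b g) = 0"
    unfolding conf_length_def using True by (simp add: subpath_def)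
  moreover have "Ls rho g {a..b} = Ls rho g {}"
    by (rule Ls_cong_AE) (use AE_neq_real[of a] in \<open>eventually_elim, use True in auto\<close>)
  ultimately show ?thesis by (simp add: Ls_def)
next
  case False
  with ab have ab': "a < b" by simp
  obtain G D N where GD: "G \<in> borel_measurable borel" "D \<in> borel_measurable borel"
    "\<And>t. t\<in>{0..1} \<Longrightarrow> G t = g t" "finite N"
    "\<And>t. t \<in> {0..1} - N \<Longrightarrow> vector_derivative g (at t) = D t"
    "\<And>t. t \<in> {0..1} - N \<Longrightarrow> g differentiable (at t)"
    using valid_path_meas[OF g] by blast
  note [measurable] = GD(1) GD(2) rho(1)
  define F where "F t = ennreal (sqrt (rho (G t)) * norm (D t)) * indicator {a..b} t" for t
  have Fm: "F \<in> borel_measurable borel" unfolding F_def by measurable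
  have "Ls rho g {a..b} = integral\<^sup>N lborel F"
    unfolding Ls_def
    by (rule nn_integral_cong_AE)
       (use AE_not_in_finite[OF GD(4)] in \<open>eventually_elim, use ab GD in \<open>auto simp: F_def indicator_def\<close>\<close>)
  also have "\<dots> = ennreal (b - a) * (\<integral>\<^sup>+x. F (a + (b - a) * x) \<partial>lborel)"
    using nn_integral_real_affine[OF Fm, of "b - a" a] ab' by simp
  also have "\<dots> = (\<integral>\<^sup>+x. ennreal (b - a) * F (a + (b - a) * x) \<partial>lborel)"
    by (rule nn_integral_cmult[symmetric]) (use Fm in measurable)
  also have "\<dots> = conf_length rho (subpath a b g)"
    unfolding conf_length_def
  proof (rule nn_integral_cong_AE)
    have fin: "finite ((\<lambda>x. (b - a) * x + a) -` N)"
      using ab' by (intro finite_vimageI[OF GD(4)]) (auto simp: inj_on_def)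
    show "AE x in lborel. ennreal (b - a) * F (a + (b - a) * x) =
        ennreal (sqrt (rho (subpath a b g x)) * cmod (vector_derivative (subpath a b g) (at x))) * indicator {0..1} x"
      using AE_not_in_finite[OF fin]
    proof eventually_elim
      case (elim x)
      show ?case
      proof (cases "x \<in> {0..1}")
        case False
        have "a + (b - a) * x \<notin> {a..b}"
        proof
          assume "a + (b - a) * x \<in> {a..b}"
          then have "0 \<le> (b - a) * x" "(b - a) * x \<le> (b - a) * 1" by auto
          then have "0 \<le> x" "x \<le> 1" using ab' by (auto simp: zero_le_mult_iff)
          with False show False by auto
        qed
        then show ?thesis using False by (simp add: F_def)
      next
        case True
        let ?s = "(b - a) * x + a"
        have s01: "?s \<in> {a..b}"
          using True ab' mult_left_le[of x "b-a"] mult_right_mono[of a b x] by (auto simp: algebra_simps)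
        then have s1: "?s \<in> {0..1}" using ab by auto
        have sN: "?s \<notin> N" using elim by simp
        have vd: "vector_derivative (\<lambda>x. g ((b-a) * x + a)) (at x) = (b-a) *\<^sub>R vector_derivative g (at ((b-a) * x + a))"
        proof (rule vector_derivative_at [OF vector_diff_chain_at [simplified o_def]])
          show "((\<lambda>x. (b - a) * x + a) has_vector_derivative b - a) (at x)"
            by (intro derivative_eq_intros | simp)+
          show "(g has_vector_derivative vector_derivative g (at ((b - a) * x + a))) (at ((b - a) * x + a))"
            using GD(6)[of ?s] s1 sN by (simp add: vector_derivative_works)
        qed
        have e1: "subpath a b g x = g ?s" by (simp add: subpath_def)
        have e2: "vector_derivative (subpath a b g) (at x) = (b-a) *\<^sub>R D ?s"
          using vd GD(5)[of ?s] s1 sN by (simp add: subpath_def)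
        have "ennreal (sqrt (rho (subpath a b g x)) * cmod (vector_derivative (subpath a b g) (at x)))
            = ennreal (sqrt (rho (g ?s)) * (\<bar>b - a\<bar> * norm (D ?s)))"
          by (simp only: e1 e2 norm_scaleR)
        also have "\<dots> = ennreal ((b - a) * (sqrt (rho (G ?s)) * norm (D ?s)))"
          using GD(3)[OF s1] ab' by (simp add: mult_ac)
        also have "\<dots> = ennreal (b - a) * ennreal (sqrt (rho (G ?s)) * norm (D ?s))"
          using ab' rho(2) by (simp add: ennreal_mult)
        finally show ?thesis
          using True s01 by (simp add: F_def add.commute)
      qed
    qed
  qed
  finally show ?thesis ..
qed



lemma conf_length_meas:
  fixes g :: "real \<Rightarrow> complex"
  assumes g: "valid_path g" and rho: "rho \<in> borel_measurable borel" "\<And>w. 0 \<le> rho w"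
  obtains F N where "F \<in> borel_measurable borel" "finite N"
    "\<And>t. F t = (if t \<in> {0..1} then F t else 0)"
    "\<And>t. t \<in> {0..1} - N \<Longrightarrow> g differentiable (at t)"
    "\<And>t. t \<in> {0..1} - N \<Longrightarrow> F t = ennreal (sqrt (rho (g t)) * norm (vector_derivative g (at t)))"
    "conf_length rho g = integral\<^sup>N lborel F"
proof -
  obtain G D N where GD: "G \<in> borel_measurable borel" "D \<in> borel_measurable borel"
    "\<And>t. t\<in>{0..1} \<Longrightarrow> G t = g t" "finite N"
    "\<And>t. t \<in> {0..1} - N \<Longrightarrow> vector_derivative g (at t) = D t"
    "\<And>t. t \<in> {0..1} - N \<Longrightarrow> g differentiable (at t)"
    using valid_path_meas[OF g] by blast
  note [measurable] = GD(1) GD(2) rho(1)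
  define F where "F t = ennreal (sqrt (rho (G t)) * norm (D t)) * indicator {0..1} t" for t
  have Fm: "F \<in> borel_measurable borel" unfolding F_def by measurable
  have "conf_length rho g = integral\<^sup>N lborel F"
    unfolding conf_length_def
    by (rule nn_integral_cong_AE)
       (use AE_not_in_finite[OF GD(4)] in \<open>eventually_elim, use GD in \<open>auto simp: F_def indicator_def\<close>\<close>)
  then show ?thesis
    by (intro that[OF Fm GD(4) _ GD(6)]) (auto simp: F_def GD(3) GD(5))
qed

lemma conf_length_join:
  fixes g1 g2 :: "real \<Rightarrow> complex"
  assumes g1: "valid_path g1" and g2: "valid_path g2" and fs: "pathfinish g1 = pathstart g2"
    and rho: "rho \<in> borel_measurable borel" "\<And>w. 0 \<le> rho w"
  shows "conf_length rho (g1 +++ g2) = conf_length rho g1 + conf_length rho g2"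
proof -
  obtain F1 N1 where F1: "F1 \<in> borel_measurable borel" "finite N1"
    "\<And>t. F1 t = (if t \<in> {0..1} then F1 t else 0)"
    "\<And>t. t \<in> {0..1} - N1 \<Longrightarrow> g1 differentiable (at t)"
    "\<And>t. t \<in> {0..1} - N1 \<Longrightarrow> F1 t = ennreal (sqrt (rho (g1 t)) * norm (vector_derivative g1 (at t)))"
    "conf_length rho g1 = integral\<^sup>N lborel F1"
    using conf_length_meas[OF g1 rho] by blast
  obtain F2 N2 where F2: "F2 \<in> borel_measurable borel" "finite N2"
    "\<And>t. F2 t = (if t \<in> {0..1} then F2 t else 0)"
    "\<And>t. t \<in> {0..1} - N2 \<Longrightarrow> g2 differentiable (at t)"
    "\<And>t. t \<in> {0..1} - N2 \<Longrightarrow> F2 t = ennreal (sqrt (rho (g2 t)) * norm (vector_derivative g2 (at t)))"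
    "conf_length rho g2 = integral\<^sup>N lborel F2"
    using conf_length_meas[OF g2 rho] by blast
  note [measurable] = F1(1) F2(1)
  have vg: "valid_path (g1 +++ g2)" using valid_path_join[OF g1 g2 fs] .
  have d1: "vector_derivative (g1 +++ g2) (at z) = 2 *\<^sub>R vector_derivative g1 (at (z*2))"
      if "0 \<le> z" "z*2 < 1" "z*2 \<notin> N1" for z
    unfolding joinpaths_def
  proof (rule vector_derivative_at [OF has_vector_derivative_transform_within])
    show "0 < \<bar>z - 1/2\<bar>"
      using that by auto
    have "((*) 2 has_vector_derivative 2) (at z)"
      by (simp add: has_vector_derivative_def has_derivative_def bounded_linear_mult_left)
    moreover have "(g1 has_vector_derivative vector_derivative g1 (at (z * 2))) (at (2 * z))"
      using F1(4)[of "z*2"] that by (auto simp: algebra_simps vector_derivative_works)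
    ultimately
    show "((\<lambda>x. g1 (2 * x)) has_vector_derivative 2 *\<^sub>R vector_derivative g1 (at (z * 2))) (at z)"
      by (intro vector_diff_chain_at [simplified o_def])
  qed (use that in \<open>simp_all add: dist_real_def abs_if split: if_split_asm\<close>)
  have d2: "vector_derivative (g1 +++ g2) (at z) = 2 *\<^sub>R vector_derivative g2 (at (z*2 - 1))"
           if "1 < z*2" "z \<le> 1" "z*2 - 1 \<notin> N2" for z
    unfolding joinpaths_def
  proof (rule vector_derivative_at [OF has_vector_derivative_transform_within])
    show "0 < \<bar>z - 1/2\<bar>"
      using that by auto
    have "((\<lambda>x. 2 * x - 1) has_vector_derivative 2) (at z)"
      by (simp add: has_vector_derivative_def has_derivative_def bounded_linear_mult_left)
    moreover have "(g2 has_vector_derivative vector_derivative g2 (at (z * 2 - 1))) (at (2 * z - 1))"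
      using F2(4)[of "z*2-1"] that by (auto simp: algebra_simps vector_derivative_works)
    ultimately
    show "((\<lambda>x. g2 (2 * x - 1)) has_vector_derivative 2 *\<^sub>R vector_derivative g2 (at (z * 2 - 1))) (at z)"
      by (intro vector_diff_chain_at [simplified o_def])
  qed (use that in \<open>simp_all add: dist_real_def abs_if split: if_split_asm\<close>)
  have h1: "Ls rho (g1 +++ g2) {0..<1/2} = conf_length rho g1"
  proof -
    have fin: "finite (insert (1/2) ((\<lambda>x. 2 * x) -` N1))"
      using F1(2) by (force intro: finite_vimageI [where h = "(*)2"] inj_onI)
    have "Ls rho (g1 +++ g2) {0..<1/2} = (\<integral>\<^sup>+x. ennreal 2 * F1 (0 + 2 * x) \<partial>lborel)"
      unfolding Ls_def
    proof (rule nn_integral_cong_AE)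
      show "AE x in lborel. ennreal (sqrt (rho ((g1 +++ g2) x)) * cmod (vector_derivative (g1 +++ g2) (at x))) * indicator {0..<1/2} x = ennreal 2 * F1 (0 + 2 * x)"
        using AE_not_in_finite[OF fin]
      proof eventually_elim
        case (elim x)
        show ?case
        proof (cases "x \<in> {0..<1/2}")
          case True
          then have x1: "2 * x \<in> {0..1} - N1" using elim by auto
          have "ennreal (sqrt (rho ((g1 +++ g2) x)) * cmod (vector_derivative (g1 +++ g2) (at x)))
              = ennreal (2 * (sqrt (rho (g1 (2*x))) * cmod (vector_derivative g1 (at (2 * x)))))"
            using True d1[of x] elim by (simp add: joinpaths_def mult_ac)
          also have "\<dots> = ennreal 2 * F1 (2 * x)"
            using F1(5)[OF x1] rho(2) by (simp add: ennreal_mult)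
          finally show ?thesis using True by simp
        next
          case False
          then have "2 * x \<notin> {0..1}" using elim by auto
          then have "F1 (2 * x) = 0" by (subst F1(3)) auto
          then show ?thesis using False by simp
        qed
      qed
    qed
    also have "\<dots> = integral\<^sup>N lborel F1"
      using nn_integral_real_affine[OF F1(1), of 2 0]
      by (simp add: nn_integral_cmult)
    finally show ?thesis using F1(6) by simp
  qed
  have h2: "Ls rho (g1 +++ g2) {1/2..1} = conf_length rho g2"
  proof -
    have fin: "finite (insert (1/2) ((\<lambda>x. 2 * x - 1) -` N2))"
      using F2(2) by (force intro: finite_vimageI [where h = "\<lambda>x. 2*x-1"] inj_onI)
    have "Ls rho (g1 +++ g2) {1/2..1} = (\<integral>\<^sup>+x. ennreal 2 * F2 (-1 + 2 * x) \<partial>lborel)"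
      unfolding Ls_def
    proof (rule nn_integral_cong_AE)
      show "AE x in lborel. ennreal (sqrt (rho ((g1 +++ g2) x)) * cmod (vector_derivative (g1 +++ g2) (at x))) * indicator {1/2..1} x = ennreal 2 * F2 (-1 + 2 * x)"
        using AE_not_in_finite[OF fin]
      proof eventually_elim
        case (elim x)
        show ?case
        proof (cases "x \<in> {1/2..1}")
          case True
          then have x1: "2 * x - 1 \<in> {0..1} - N2" using elim by auto
          have "ennreal (sqrt (rho ((g1 +++ g2) x)) * cmod (vector_derivative (g1 +++ g2) (at x)))
              = ennreal (2 * (sqrt (rho (g2 (2*x-1))) * cmod (vector_derivative g2 (at (2 * x - 1)))))"
            using True d2[of x] elim by (simp add: joinpaths_def mult_ac)
          also have "\<dots> = ennreal 2 * F2 (2 * x - 1)"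
            using F2(5)[OF x1] rho(2) by (simp add: ennreal_mult)
          finally show ?thesis using True by simp
        next
          case False
          then have "-1 + 2 * x \<notin> {0..1}" using elim by auto
          then have "F2 (-1 + 2 * x) = 0" by (subst F2(3)) auto
          then show ?thesis using False by simp
        qed
      qed
    qed
    also have "\<dots> = integral\<^sup>N lborel F2"
      using nn_integral_real_affine[OF F2(1), of 2 "-1"]
      by (simp add: nn_integral_cmult)
    finally show ?thesis using F2(6) by simp
  qed
  have "conf_length rho (g1 +++ g2) = Ls rho (g1 +++ g2) ({0..<1/2} \<union> {1/2..1})"
    unfolding conf_length_Ls by (intro arg_cong[where f="Ls rho (g1 +++ g2)"]) auto
  also have "\<dots> = Ls rho (g1 +++ g2) {0..<1/2} + Ls rho (g1 +++ g2) {1/2..1}"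
    by (rule Ls_union[OF vg rho(1)]) auto
  finally show ?thesis using h1 h2 by simp
qed




lemma conf_dist_le_length:
  "valid_path h \<Longrightarrow> pathstart h = p \<Longrightarrow> pathfinish h = q \<Longrightarrow> conf_dist rho p q \<le> conf_length rho h"
  unfolding conf_dist_def by (rule INF_lower) auto

lemma conf_dist_surgery:
  fixes g h :: "real \<Rightarrow> complex"
  assumes g: "valid_path g" "pathstart g = p" "pathfinish g = q"
    and ab: "0 \<le> a" "a \<le> b" "b \<le> 1"
    and h: "valid_path h" "pathstart h = g a" "pathfinish h = g b"
    and rho: "rho \<in> borel_measurable borel" "\<And>w. 0 \<le> rho w"
  shows "conf_dist rho p q \<le> Ls rho g {0..a} + conf_length rho h + Ls rho g {b..1}"
proof -
  let ?P1 = "subpath 0 a g" and ?P3 = "subpath b 1 g"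
  have v1: "valid_path ?P1" and v3: "valid_path ?P3"
    using ab by (auto intro!: valid_path_subpath g(1))
  have v23: "valid_path (h +++ ?P3)"
    using h v3 by (intro valid_path_join) auto
  have v: "valid_path (?P1 +++ (h +++ ?P3))"
    using v1 v23 h by (intro valid_path_join) auto
  have "conf_dist rho p q \<le> conf_length rho (?P1 +++ (h +++ ?P3))"
    by (rule conf_dist_le_length[OF v]) (use g in \<open>auto simp: pathstart_def pathfinish_def subpath_def joinpaths_def\<close>)
  also have "\<dots> = conf_length rho ?P1 + (conf_length rho h + conf_length rho ?P3)"
    using v1 v3 h rho
    by (simp add: conf_length_join valid_path_join)
  also have "\<dots> = Ls rho g {0..a} + conf_length rho h + Ls rho g {b..1}"
    using ab by (simp add: conf_length_subpath[OF g(1) rho] add.assoc)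
  finally show ?thesis .
qed

lemma int_powr01: assumes "0 < (e::real)"
  shows "(\<integral>\<^sup>+x. ennreal (\<bar>x\<bar> powr (e - 1)) * indicator {0..1} x \<partial>lborel) = ennreal (1 / e)"
proof -
  have "((\<lambda>x. x powr (e - 1)) has_integral (1 powr (e - 1 + 1) / (e - 1 + 1))) {0..1}"
    by (rule has_integral_powr_from_0) (use assms in auto)
  then have "((\<lambda>x::real. x powr (e - 1)) has_integral (1 / e)) {0..1}" by simp
  then have I: "((\<lambda>x::real. \<bar>x\<bar> powr (e - 1)) has_integral (1 / e)) {0..1}"
    by (rule has_integral_eq[rotated]) auto
  show ?thesis
    by (rule nn_integral_has_integral_lebesgue'[OF _ I]) auto
qed

lemma int_powr_shift: assumes "0 < (e::real)" "e < 1"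
  shows "(\<integral>\<^sup>+t. ennreal (\<bar>t - t0\<bar> powr (e - 1)) * indicator {0..1} t \<partial>lborel) \<le> ennreal (2 / e + 1)"
proof -
  define f where "f x = ennreal (\<bar>x\<bar> powr (e - 1)) * indicator {-1..1} x" for x :: real
  have fm: "f \<in> borel_measurable borel" unfolding f_def by measurable
  have "(\<integral>\<^sup>+t. ennreal (\<bar>t - t0\<bar> powr (e - 1)) * indicator {0..1} t \<partial>lborel)
      \<le> (\<integral>\<^sup>+t. f (t - t0) + indicator {0..1} t \<partial>lborel)"
  proof (rule nn_integral_mono)
    fix t :: real
    show "ennreal (\<bar>t - t0\<bar> powr (e - 1)) * indicator {0..1} t \<le> f (t - t0) + indicator {0..1} t"
    proof (cases "\<bar>t - t0\<bar> \<le> 1")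
      case True then show ?thesis
        by (auto simp: f_def indicator_def)
    next
      case False
      then have "\<bar>t - t0\<bar> powr (e - 1) \<le> 1"
        using assms powr_less_one[of "\<bar>t - t0\<bar>" "e - 1"] by auto
      then show ?thesis
        by (auto simp: f_def indicator_def)
    qed
  qed
  also have "\<dots> = (\<integral>\<^sup>+t. f (t - t0) \<partial>lborel) + (\<integral>\<^sup>+t. indicator {0..1::real} t \<partial>lborel)"
  proof -
    have m1: "(\<lambda>t. f (t - t0)) \<in> borel_measurable lborel" using fm by measurable
    have m2: "(indicator {0..1} :: real \<Rightarrow> ennreal) \<in> borel_measurable lborel" by measurable
    show ?thesis by (rule nn_integral_add[OF m1 m2])
  qed
  also have "(\<integral>\<^sup>+t. indicator {0..1::real} t \<partial>lborel) = (1 :: ennreal)"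
    by simp
  also have "(\<integral>\<^sup>+t. f (t - t0) \<partial>lborel) = integral\<^sup>N lborel f"
    using nn_integral_real_affine[OF fm, of 1 "-t0"] by simp
  also have "integral\<^sup>N lborel f \<le> (\<integral>\<^sup>+x. ennreal (\<bar>x\<bar> powr (e - 1)) * indicator {0..1} (- x) + ennreal (\<bar>x\<bar> powr (e - 1)) * indicator {0..1} x \<partial>lborel)"
    unfolding f_def by (intro nn_integral_mono) (auto simp: indicator_def)
  also have "\<dots> = (\<integral>\<^sup>+x. ennreal (\<bar>x\<bar> powr (e - 1)) * indicator {0..1} (- x) \<partial>lborel) + (\<integral>\<^sup>+x. ennreal (\<bar>x\<bar> powr (e - 1)) * indicator {0..1} x \<partial>lborel)"
    by (rule nn_integral_add) measurable
  also have "(\<integral>\<^sup>+x. ennreal (\<bar>x\<bar> powr (e - 1)) * indicator {0..1} (- x) \<partial>lborel) = (\<integral>\<^sup>+x. ennreal (\<bar>x\<bar> powr (e - 1)) * indicator {0..1} x \<partial>lborel)"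
  proof -
    define h where "h x = ennreal (\<bar>x\<bar> powr (e - 1)) * indicator {0..1} x" for x :: real
    have hm: "h \<in> borel_measurable borel" unfolding h_def by measurable
    show ?thesis
      using nn_integral_real_affine[OF hm, of "-1" 0] by (simp add: h_def)
  qed
  finally have "(\<integral>\<^sup>+t. ennreal (\<bar>t - t0\<bar> powr (e - 1)) * indicator {0..1} t \<partial>lborel) \<le> ennreal (1/e) + ennreal (1/e) + 1"
    using int_powr01[OF assms(1)] by simp
  also have "\<dots> = ennreal (2 / e + 1)"
    using assms by (simp add: ennreal_plus[symmetric] del: ennreal_plus) (simp add: ennreal_plus)
  finally show ?thesis .
qed




lemma sqrt_cone: assumes "0 < g"
  shows "sqrt (cone_density g z) = g * norm z powr (g - 1)"
proof -
  have "sqrt (norm z powr (2 * g - 2)) = norm z powr (g - 1)"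
    by (simp add: powr_half_sqrt[symmetric] powr_powr algebra_simps)
  then show ?thesis
    using assms by (simp add: cone_density_def real_sqrt_mult)
qed

lemma line_cone:
  assumes g: "0 < g" "g < 1"
  shows "conf_length (\<lambda>w. cone_density g (w - b)) (linepath x y) \<le> ennreal (3 * norm (y - x) powr g)"
proof -
  define v where "v = y - x"
  define u where "u = x - b"
  have lp: "linepath x y t - b = u + of_real t * v" for t
    by (simp add: linepath_def u_def v_def scaleR_conv_of_real algebra_simps)
  have cl: "conf_length (\<lambda>w. cone_density g (w - b)) (linepath x y)
      = (\<integral>\<^sup>+t. ennreal (g * norm (u + of_real t * v) powr (g - 1) * norm v) * indicator {0..1} t \<partial>lborel)"
    unfolding conf_length_def by (simp add: sqrt_cone[OF g(1)] lp v_def)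
  show ?thesis
  proof (cases "v = 0")
    case True
    then show ?thesis unfolding cl by simp
  next
    case False
    then have nv: "norm v > 0" by simp
    define t0 where "t0 = - Re (u / v)"
    have pw: "ennreal (g * norm (u + of_real t * v) powr (g - 1) * norm v) * indicator {0..1} t
        \<le> ennreal (g * norm v powr g) * (ennreal (\<bar>t - t0\<bar> powr (g - 1)) * indicator {0..1} t)"
      if "t \<noteq> t0" for t
    proof -
      have "norm (u + of_real t * v) = norm v * norm (u / v + of_real t)"
        using False by (simp add: norm_mult[symmetric] algebra_simps)
      also have "norm (u / v + of_real t) \<ge> \<bar>Re (u / v + of_real t)\<bar>"
        by (rule abs_Re_le_cmod)
      then have "norm v * norm (u / v + of_real t) \<ge> norm v * \<bar>t - t0\<bar>"
        using nv by (intro mult_left_mono) (auto simp: t0_def)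
      finally have ge: "norm (u + of_real t * v) \<ge> norm v * \<bar>t - t0\<bar>" .
      have pos: "norm v * \<bar>t - t0\<bar> > 0" using nv that by simp
      have "norm (u + of_real t * v) powr (g - 1) \<le> (norm v * \<bar>t - t0\<bar>) powr (g - 1)"
        by (rule powr_mono2') (use g pos ge in auto)
      also have "\<dots> = norm v powr (g - 1) * \<bar>t - t0\<bar> powr (g - 1)"
        by (simp add: powr_mult)
      finally have "g * norm (u + of_real t * v) powr (g - 1) * norm v
          \<le> g * (norm v powr (g - 1) * \<bar>t - t0\<bar> powr (g - 1)) * norm v"
        using g nv by (intro mult_right_mono mult_left_mono) auto
      also have "\<dots> = g * (norm v * norm v powr (g - 1)) * \<bar>t - t0\<bar> powr (g - 1)"
        by (simp add: mult_ac)
      also have "norm v * norm v powr (g - 1) = norm v powr g"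
        using nv by (simp add: powr_mult_base)
      finally have "g * norm (u + of_real t * v) powr (g - 1) * norm v
          \<le> (g * norm v powr g) * \<bar>t - t0\<bar> powr (g - 1)" .
      then have "ennreal (g * norm (u + of_real t * v) powr (g - 1) * norm v)
          \<le> ennreal (g * norm v powr g) * ennreal (\<bar>t - t0\<bar> powr (g - 1))"
        using g by (simp add: ennreal_mult[symmetric] ennreal_leI)
      then show ?thesis
        by (auto simp: indicator_def)
    qed
    have "conf_length (\<lambda>w. cone_density g (w - b)) (linepath x y)
        \<le> (\<integral>\<^sup>+t. ennreal (g * norm v powr g) * (ennreal (\<bar>t - t0\<bar> powr (g - 1)) * indicator {0..1} t) \<partial>lborel)"
      unfolding cl
      by (rule nn_integral_mono_AE) (use AE_neq_real[of t0] in \<open>eventually_elim, use pw in auto\<close>)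
    also have "\<dots> = ennreal (g * norm v powr g) * (\<integral>\<^sup>+t. ennreal (\<bar>t - t0\<bar> powr (g - 1)) * indicator {0..1} t \<partial>lborel)"
      by (rule nn_integral_cmult) measurable
    also have "\<dots> \<le> ennreal (g * norm v powr g) * ennreal (2 / g + 1)"
      by (intro mult_left_mono int_powr_shift g) simp
    also have "\<dots> = ennreal (g * norm v powr g * (2 / g + 1))"
      using g by (subst ennreal_mult) auto
    also have "g * norm v powr g * (2 / g + 1) = (2 + g) * norm v powr g"
      using g by (simp add: field_simps)
    also have "\<dots> \<le> ennreal (3 * norm (y - x) powr g)"
      using g by (intro ennreal_leI mult_right_mono) (auto simp: v_def intro: mult_right_mono)
    finally show ?thesis .
  qed
qed




lemma sqrt_omegaF:
  assumes "0 < b2 + b3 - 1"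
  shows "sqrt (omegaF_density b2 b3 a2 a3 m w) =
    (b2 + b3 - 1) * norm (w - m * a2) powr (b2 - 1) * norm (w - m * a3) powr (b3 - 1)"
proof -
  have s: "sqrt (x powr (2 * b - 2)) = x powr (b - 1)" if "x \<ge> 0" for x b :: real
    by (simp add: powr_half_sqrt[symmetric] powr_powr algebra_simps)
  show ?thesis
    using assms by (simp add: omegaF_density_def real_sqrt_mult s)
qed

lemma young_powr:
  fixes X Y e2 e3 :: real
  assumes "X \<ge> 0" "Y \<ge> 0" "e2 \<le> 0" "e3 \<le> 0"
  shows "X powr e2 * Y powr e3 \<le> X powr (e2 + e3) + Y powr (e2 + e3)"
proof (cases "X = 0 \<or> Y = 0")
  case True then show ?thesis by auto
next
  case False
  then have p: "X > 0" "Y > 0" using assms by auto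
  show ?thesis
  proof (cases "X \<le> Y")
    case True
    have "Y powr e3 \<le> X powr e3" by (rule powr_mono2') (use assms p True in auto)
    then have "X powr e2 * Y powr e3 \<le> X powr e2 * X powr e3"
      by (intro mult_left_mono) auto
    also have "\<dots> = X powr (e2 + e3)" by (simp add: powr_add)
    finally show ?thesis by (smt (verit) powr_ge_zero)
  next
    case False
    have "X powr e2 \<le> Y powr e2" by (rule powr_mono2') (use assms p False in auto)
    then have "X powr e2 * Y powr e3 \<le> Y powr e2 * Y powr e3"
      by (intro mult_right_mono) auto
    also have "\<dots> = Y powr (e2 + e3)" by (simp add: powr_add)
    finally show ?thesis by (smt (verit) powr_ge_zero)
  qed
qed

lemma sqrt_omegaF_le:
  assumes "0 < b2 + b3 - 1" "b2 < 1" "b3 < 1"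
  shows "sqrt (omegaF_density b2 b3 a2 a3 m w) \<le>
     sqrt (cone_density (b2 + b3 - 1) (w - m * a2)) + sqrt (cone_density (b2 + b3 - 1) (w - m * a3))"
proof -
  have "norm (w - m * a2) powr (b2 - 1) * norm (w - m * a3) powr (b3 - 1)
     \<le> norm (w - m * a2) powr ((b2 - 1) + (b3 - 1)) + norm (w - m * a3) powr ((b2 - 1) + (b3 - 1))"
    by (rule young_powr) (use assms in auto)
  then have "(b2 + b3 - 1) * (norm (w - m * a2) powr (b2 - 1) * norm (w - m * a3) powr (b3 - 1))
     \<le> (b2 + b3 - 1) * (norm (w - m * a2) powr ((b2 - 1) + (b3 - 1)) + norm (w - m * a3) powr ((b2 - 1) + (b3 - 1)))"
    using assms by (intro mult_left_mono) auto
  then show ?thesis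
    using assms by (simp add: sqrt_omegaF sqrt_cone algebra_simps)
qed

lemma omegaF_meas: "omegaF_density b2 b3 a2 a3 m \<in> borel_measurable borel"
  unfolding omegaF_density_def by measurable

lemma cone_meas: "(\<lambda>w. cone_density g (w - b)) \<in> borel_measurable borel"
  unfolding cone_density_def by measurable

lemma line_F:
  assumes "0 < b2 + b3 - 1" "b2 < 1" "b3 < 1"
  shows "conf_length (omegaF_density b2 b3 a2 a3 m) (linepath x y) \<le> ennreal (6 * norm (y - x) powr (b2 + b3 - 1))"
proof -
  let ?g = "b2 + b3 - 1"
  let ?c = "\<lambda>b t. ennreal (sqrt (cone_density ?g (linepath x y t - b)) * norm (y - x)) * indicator {0..1::real} t"
  have "conf_length (omegaF_density b2 b3 a2 a3 m) (linepath x y) \<le> (\<integral>\<^sup>+t. ?c (m * a2) t + ?c (m * a3) t \<partial>lborel)"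
    unfolding conf_length_def
  proof (intro nn_integral_mono)
    fix t :: real
    let ?A = "sqrt (cone_density ?g (linepath x y t - m * a2)) * norm (y - x)"
    let ?B = "sqrt (cone_density ?g (linepath x y t - m * a3)) * norm (y - x)"
    have "sqrt (omegaF_density b2 b3 a2 a3 m (linepath x y t)) * norm (y - x)
       \<le> (sqrt (cone_density ?g (linepath x y t - m * a2)) + sqrt (cone_density ?g (linepath x y t - m * a3))) * norm (y - x)"
      by (intro mult_right_mono sqrt_omegaF_le assms) auto
    then have "ennreal (sqrt (omegaF_density b2 b3 a2 a3 m (linepath x y t)) * norm (y - x)) \<le> ennreal (?A + ?B)"
      by (intro ennreal_leI) (simp add: distrib_right)
    also have "\<dots> = ennreal ?A + ennreal ?B"
      by (rule ennreal_plus) (auto simp: cone_density_def)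
    finally show "ennreal (sqrt (omegaF_density b2 b3 a2 a3 m (linepath x y t)) * cmod (vector_derivative (linepath x y) (at t))) * indicator {0..1} t
         \<le> ?c (m * a2) t + ?c (m * a3) t"
      by (auto simp: indicator_def)
  qed
  also have "\<dots> = (\<integral>\<^sup>+t. ?c (m * a2) t \<partial>lborel) + (\<integral>\<^sup>+t. ?c (m * a3) t \<partial>lborel)"
    by (rule nn_integral_add) (unfold linepath_def cone_density_def, measurable)
  also have "\<dots> = conf_length (\<lambda>w. cone_density ?g (w - m * a2)) (linepath x y) + conf_length (\<lambda>w. cone_density ?g (w - m * a3)) (linepath x y)"
    unfolding conf_length_def by simp
  also have "conf_length (\<lambda>w. cone_density ?g (w - m * a2)) (linepath x y) + conf_length (\<lambda>w. cone_density ?g (w - m * a3)) (linepath x y)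
      \<le> ennreal (3 * norm (y - x) powr ?g) + ennreal (3 * norm (y - x) powr ?g)"
    by (intro add_mono line_cone) (use assms in auto)
  also have "\<dots> = ennreal (6 * norm (y - x) powr ?g)"
    by (simp add: ennreal_plus[symmetric] del: ennreal_plus)
  finally show ?thesis .
qed




lemma ratio_pow:
  fixes w b :: complex and B e :: real
  assumes b: "norm b \<le> B" and w: "2 * B \<le> norm w" and B: "B > 0" and e: "-1 \<le> e" "e \<le> 0"
  shows "norm (w - b) powr e \<le> norm w powr e * (1 + 2 * B / norm w)"
    and "norm w powr e \<le> norm (w - b) powr e * (1 + B / norm w)"
proof -
  define t where "t = B / norm w"
  have nw: "norm w > 0" using w B by linarith
  have t: "0 < t" "t \<le> 1/2"
    using nw B w by (auto simp: t_def pos_divide_le_eq)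
  have wt1: "norm w * (1 - t) = norm w - B" and wt2: "norm w * (1 + t) = norm w + B"
    using nw by (auto simp: t_def algebra_simps)
  have lo: "norm (w - b) \<ge> norm w * (1 - t)"
    using norm_triangle_ineq2[of w b] b wt1 by linarith
  have hi: "norm (w - b) \<le> norm w * (1 + t)"
    using norm_triangle_ineq4[of w b] b wt2 by linarith
  have pos: "norm w * (1 - t) > 0" using nw t by simp
  have "norm (w - b) powr e \<le> (norm w * (1 - t)) powr e"
    by (rule powr_mono2') (use e pos lo in auto)
  also have "\<dots> = norm w powr e * (1 - t) powr e"
    using nw t by (simp add: powr_mult)
  also have "(1 - t) powr e \<le> (1 - t) powr (-1)"
    by (rule powr_mono') (use e t in auto)
  also have "(1 - t) powr (-1) = 1 / (1 - t)"
    using t by (intro powr_neg_one) auto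
  also have "1 / (1 - t) \<le> 1 + 2 * t"
  proof -
    have "t * t \<le> t * (1/2)" using t by (intro mult_left_mono) auto
    then have "1 \<le> (1 + 2 * t) * (1 - t)" by (simp add: algebra_simps)
    then show ?thesis using t by (simp add: divide_le_eq)
  qed
  finally show "norm (w - b) powr e \<le> norm w powr e * (1 + 2 * B / norm w)"
    using nw by (simp add: t_def mult_left_mono)
  have pos2: "norm (w - b) > 0" using lo pos by linarith
  have "norm w powr e * (1 / (1 + t)) = norm w powr e * (1 + t) powr (-1)"
    using t by (simp add: powr_neg_one)
  also have "\<dots> \<le> norm w powr e * (1 + t) powr e"
    by (intro mult_left_mono powr_mono) (use e t in auto)
  also have "\<dots> = (norm w * (1 + t)) powr e"
    using nw t by (simp add: powr_mult)
  also have "\<dots> \<le> norm (w - b) powr e"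
    by (rule powr_mono2') (use e pos2 hi in auto)
  finally have "norm w powr e * (1 / (1 + t)) \<le> norm (w - b) powr e" .
  then have "norm w powr e \<le> norm (w - b) powr e * (1 + t)"
    using t by (simp add: field_simps)
  then show "norm w powr e \<le> norm (w - b) powr e * (1 + B / norm w)"
    by (simp add: t_def)
qed

lemma ratio_FC:
  fixes b2 b3 :: real and a2 a3 m w :: complex and A :: real
  assumes bet: "0 < b2" "b2 < 1" "0 < b3" "b3 < 1" "0 < b2 + b3 - 1"
    and A: "norm a2 \<le> A" "norm a3 \<le> A" "0 < A" and m: "0 < norm m"
    and w: "2 * A * norm m \<le> norm w"
  shows "sqrt (omegaF_density b2 b3 a2 a3 m w) \<le> sqrt (cone_density (b2 + b3 - 1) w) * (1 + 3 * (2 * A * norm m) / norm w)"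
    and "sqrt (cone_density (b2 + b3 - 1) w) \<le> sqrt (omegaF_density b2 b3 a2 a3 m w) * (1 + 3 * (2 * A * norm m) / norm w)"
proof -
  define B where "B = A * norm m"
  define t where "t = B / norm w"
  have B: "B > 0" using A m by (simp add: B_def)
  have w': "2 * B \<le> norm w" using w by (simp add: B_def)
  have nw: "norm w > 0" using w' B by linarith
  have t: "0 < t" "t \<le> 1/2" using nw B w' by (auto simp: t_def field_simps)
  have q6: "(1 + 2 * t)^2 \<le> 1 + 6 * t" "(1 + t)^2 \<le> 1 + 6 * t"
  proof -
    have "t * t \<le> t * (1/2)" using t by (intro mult_left_mono) auto
    then show "(1 + 2 * t)^2 \<le> 1 + 6 * t" "(1 + t)^2 \<le> 1 + 6 * t"
      using t by (auto simp: power2_eq_square algebra_simps)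
  qed
  have e6: "3 * (2 * A * norm m) / norm w = 6 * t" by (simp add: t_def B_def)
  have nb2: "norm (m * a2) \<le> B" and nb3: "norm (m * a3) \<le> B"
    using A m by (auto simp: B_def norm_mult mult_left_mono mult.commute)
  note r2 = ratio_pow[OF nb2 w' B, of "b2 - 1"] and r3 = ratio_pow[OF nb3 w' B, of "b3 - 1"]
  have t2: "2 * B / norm w = 2 * t" and t1: "B / norm w = t" by (auto simp: t_def)
  let ?g = "b2 + b3 - 1"
  have sc: "sqrt (cone_density ?g w) = ?g * (norm w powr (b2 - 1) * norm w powr (b3 - 1))"
    using bet by (simp add: sqrt_cone powr_add[symmetric])
  have sF: "sqrt (omegaF_density b2 b3 a2 a3 m w) = ?g * (norm (w - m * a2) powr (b2 - 1) * norm (w - m * a3) powr (b3 - 1))"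
    using bet by (simp add: sqrt_omegaF mult.assoc)
  have "norm (w - m * a2) powr (b2 - 1) * norm (w - m * a3) powr (b3 - 1)
      \<le> (norm w powr (b2 - 1) * (1 + 2 * t)) * (norm w powr (b3 - 1) * (1 + 2 * t))"
    using r2(1) r3(1) bet t2 t by (intro mult_mono) auto
  also have "\<dots> = (norm w powr (b2 - 1) * norm w powr (b3 - 1)) * (1 + 2 * t)^2"
    by (simp add: power2_eq_square mult_ac)
  also have "\<dots> \<le> (norm w powr (b2 - 1) * norm w powr (b3 - 1)) * (1 + 6 * t)"
    using q6 by (intro mult_left_mono) auto
  finally have "?g * (norm (w - m * a2) powr (b2 - 1) * norm (w - m * a3) powr (b3 - 1))
      \<le> ?g * ((norm w powr (b2 - 1) * norm w powr (b3 - 1)) * (1 + 6 * t))"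
    using bet by (intro mult_left_mono) auto
  then show "sqrt (omegaF_density b2 b3 a2 a3 m w) \<le> sqrt (cone_density ?g w) * (1 + 3 * (2 * A * norm m) / norm w)"
    unfolding sc sF e6 by (simp only: mult.assoc)
  have "norm w powr (b2 - 1) * norm w powr (b3 - 1)
      \<le> (norm (w - m * a2) powr (b2 - 1) * (1 + t)) * (norm (w - m * a3) powr (b3 - 1) * (1 + t))"
    using r2(2) r3(2) bet t1 t by (intro mult_mono) auto
  also have "\<dots> = (norm (w - m * a2) powr (b2 - 1) * norm (w - m * a3) powr (b3 - 1)) * (1 + t)^2"
    by (simp add: power2_eq_square mult_ac)
  also have "\<dots> \<le> (norm (w - m * a2) powr (b2 - 1) * norm (w - m * a3) powr (b3 - 1)) * (1 + 6 * t)"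
    using q6 by (intro mult_left_mono) auto
  finally have "?g * (norm w powr (b2 - 1) * norm w powr (b3 - 1))
      \<le> ?g * ((norm (w - m * a2) powr (b2 - 1) * norm (w - m * a3) powr (b3 - 1)) * (1 + 6 * t))"
    using bet by (intro mult_left_mono) auto
  then show "sqrt (cone_density ?g w) \<le> sqrt (omegaF_density b2 b3 a2 a3 m w) * (1 + 3 * (2 * A * norm m) / norm w)"
    unfolding sc sF e6 by (simp only: mult.assoc)
qed




lemma ext_times:
  fixes g :: "real \<Rightarrow> complex"
  assumes g: "valid_path g" and ne: "\<exists>t\<in>{0..1}. norm (g t) \<le> s"
  obtains t1 t2 where "0 \<le> t1" "t1 \<le> t2" "t2 \<le> 1" "norm (g t1) \<le> s" "norm (g t2) \<le> s"
    "{t\<in>{0..1}. norm (g t) \<le> s} \<subseteq> {t1..t2}"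
    "\<And>t. t \<in> {0..1} \<Longrightarrow> t < t1 \<Longrightarrow> norm (g t) > s"
    "\<And>t. t \<in> {0..1} \<Longrightarrow> t2 < t \<Longrightarrow> norm (g t) > s"
proof -
  define S where "S = {t\<in>{0..1}. norm (g t) \<le> s}"
  have "continuous_on {0..1} (\<lambda>t. norm (g t))"
    using valid_path_imp_path[OF g] unfolding path_def by (intro continuous_intros)
  then have "closed ({0..1} \<inter> (\<lambda>t. norm (g t)) -` {..s})"
    by (intro continuous_closed_preimage) auto
  moreover have "{0..1} \<inter> (\<lambda>t. norm (g t)) -` {..s} = S" by (auto simp: S_def)
  ultimately have cS: "closed S" by simp
  have neS: "S \<noteq> {}" using ne by (auto simp: S_def)
  have bS: "bdd_below S" "bdd_above S" by (auto simp: S_def bdd_below_def bdd_above_def)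
  have i1: "Inf S \<in> S" by (rule closed_contains_Inf[OF neS bS(1) cS])
  have i2: "Sup S \<in> S" by (rule closed_contains_Sup[OF neS bS(2) cS])
  show ?thesis
  proof (rule that[of "Inf S" "Sup S"])
    show "0 \<le> Inf S" "Sup S \<le> 1" "norm (g (Inf S)) \<le> s" "norm (g (Sup S)) \<le> s"
      using i1 i2 by (auto simp: S_def)
    show "Inf S \<le> Sup S" using i1 bS by (intro cSup_upper) auto
    have "S \<subseteq> {Inf S..Sup S}"
      using bS by (auto intro: cInf_lower cSup_upper)
    then show "{t\<in>{0..1}. norm (g t) \<le> s} \<subseteq> {Inf S..Sup S}"
      by (simp add: S_def)
    show "norm (g t) > s" if "t \<in> {0..1}" "t < Inf S" for t
    proof (rule ccontr)
      assume "\<not> ?thesis"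
      then have "t \<in> S" using that by (auto simp: S_def)
      then have "Inf S \<le> t" using bS by (intro cInf_lower) auto
      with that show False by simp
    qed
    show "norm (g t) > s" if "t \<in> {0..1}" "Sup S < t" for t
    proof (rule ccontr)
      assume "\<not> ?thesis"
      then have "t \<in> S" using that by (auto simp: S_def)
      then have "t \<le> Sup S" using bS by (intro cSup_upper) auto
      with that show False by simp
    qed
  qed
qed

lemma near_min_sub:
  fixes g :: "real \<Rightarrow> complex"
  assumes g: "valid_path g" "pathstart g = p" "pathfinish g = q"
    and rho: "rho \<in> borel_measurable borel" "\<And>w. 0 \<le> rho w"
    and gl: "conf_length rho g < conf_dist rho p q + d"
    and line: "\<And>x y. conf_length rho (linepath x y) \<le> ennreal (M * norm (y - x) powr e)"
    and ab: "0 \<le> a" "a \<le> b" "b \<le> 1"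
  shows "Ls rho g {a..b} \<le> ennreal (M * norm (g b - g a) powr e) + d"
proof (rule ccontr)
  assume "\<not> ?thesis"
  then have lt: "conf_length rho (linepath (g a) (g b)) + d < Ls rho g {a..b}"
    using line[of "g a" "g b"] by (metis add_right_mono not_le order_le_less_trans)
  have "conf_dist rho p q \<le> Ls rho g {0..a} + conf_length rho (linepath (g a) (g b)) + Ls rho g {b..1}"
    by (rule conf_dist_surgery[OF g ab _ _ _ rho]) auto
  then have "conf_dist rho p q + d \<le> Ls rho g {0..a} + (conf_length rho (linepath (g a) (g b)) + d) + Ls rho g {b..1}"
    by (metis add_right_mono add.assoc add.commute)
  also have "\<dots> \<le> Ls rho g {0..a} + Ls rho g {a..b} + Ls rho g {b..1}"
    using lt by (intro add_mono) auto
  also have "\<dots> = conf_length rho g"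
    using Ls_split3[OF g(1) rho(1) ab] by (simp add: conf_length_Ls)
  finally have "conf_dist rho p q + d \<le> conf_length rho g" .
  then show False using gl leD by blast
qed

lemma near_min_ball:
  fixes g :: "real \<Rightarrow> complex"
  assumes g: "valid_path g" "pathstart g = p" "pathfinish g = q"
    and rho: "rho \<in> borel_measurable borel" "\<And>w. 0 \<le> rho w"
    and gl: "conf_length rho g < conf_dist rho p q + d"
    and line: "\<And>x y. conf_length rho (linepath x y) \<le> ennreal (M * norm (y - x) powr e)"
    and M: "0 \<le> M" and e: "0 \<le> e" and s: "0 \<le> s"
  shows "Ls rho g {t\<in>{0..1}. norm (g t) \<le> s} \<le> ennreal (M * (2 * s) powr e) + d"
proof (cases "\<exists>t\<in>{0..1}. norm (g t) \<le> s")
  case False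
  then have "{t\<in>{0..1}. norm (g t) \<le> s} = {}" by auto
  then show ?thesis by (simp add: Ls_def)
next
  case True
  show ?thesis
  proof (rule ext_times[OF g(1) True])
  fix t1 t2 assume t: "0 \<le> t1" "t1 \<le> t2" "t2 \<le> 1" "norm (g t1) \<le> s" "norm (g t2) \<le> s"
    "{t\<in>{0..1}. norm (g t) \<le> s} \<subseteq> {t1..t2}"
  have "Ls rho g {t\<in>{0..1}. norm (g t) \<le> s} \<le> Ls rho g {t1..t2}"
    by (rule Ls_mono[OF t(6)])
  also have "\<dots> \<le> ennreal (M * norm (g t2 - g t1) powr e) + d"
    by (rule near_min_sub[OF g rho gl line t(1-3)])
  also have "norm (g t2 - g t1) \<le> 2 * s"
    using norm_triangle_ineq4[of "g t2" "g t1"] t by linarith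
  then have "M * norm (g t2 - g t1) powr e \<le> M * (2 * s) powr e"
    using M e by (intro mult_left_mono powr_mono2) auto
  then have "ennreal (M * norm (g t2 - g t1) powr e) + d \<le> ennreal (M * (2 * s) powr e) + d"
    by (intro add_right_mono ennreal_leI)
  finally show ?thesis .
  qed
qed



lemma pow2_powr: "(2::real) ^ n = 2 powr real n"
  by (simp add: powr_realpow)

lemma dyadic_term:
  fixes e r0 M :: real assumes r0: "0 < r0"
  shows "(1/2)^k * (M * (2 * (2^(k+1) * r0)) powr e) = (M * 4 powr e * r0 powr e) * (2 powr (e - 1))^k"
proof -
  have a0: "2 powr (real k + 2) = (2::real)^(k+2)"
    using powr_realpow[of 2 "k+2"] by (simp add: add.commute)
  have a: "2 * (2^(k+1) * r0) = 2 powr (real k + 2) * r0"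
    unfolding a0 by (simp add: power_add)
  have b: "(2 powr (real k + 2) * r0) powr e = 2 powr ((real k + 2) * e) * r0 powr e"
    using r0 by (simp add: powr_mult powr_powr)
  have c: "((1::real)/2)^k = 2 powr (- real k)"
  proof -
    have "2 powr (- real k) = inverse ((2::real) ^ k)" by (simp add: powr_minus powr_realpow)
    moreover have "((1::real)/2)^k = inverse (2^k)" by (simp add: power_divide inverse_eq_divide)
    ultimately show ?thesis by simp
  qed
  have d: "(2 powr (e - 1))^k = 2 powr ((e - 1) * real k)"
    by (simp add: powr_realpow[symmetric] powr_powr)
  have f: "(4::real) powr e = 2 powr (2 * e)"
  proof -
    have "(2::real) powr (2 * e) = (2 powr 2) powr e" by (simp only: powr_powr)
    then show ?thesis by simp
  qed
  have ex: "- real k + (real k + 2) * e = 2 * e + (e - 1) * real k" by (simp add: algebra_simps)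
  have "2 powr (- real k) * 2 powr ((real k + 2) * e) = (2::real) powr (- real k + (real k + 2) * e)"
    by (rule powr_add[symmetric])
  also have "\<dots> = 2 powr (2 * e + (e - 1) * real k)" by (simp only: ex)
  also have "\<dots> = 2 powr (2 * e) * 2 powr ((e - 1) * real k)" by (rule powr_add)
  finally have E: "2 powr (- real k) * 2 powr ((real k + 2) * e) = (2::real) powr (2 * e) * 2 powr ((e - 1) * real k)" .
  have "(1/2)^k * (M * (2 * (2^(k+1) * r0)) powr e) = M * r0 powr e * (2 powr (- real k) * 2 powr ((real k + 2) * e))"
    unfolding a b c by (simp only: mult_ac)
  also have "\<dots> = M * r0 powr e * (2 powr (2 * e) * 2 powr ((e - 1) * real k))" by (simp only: E)
  also have "\<dots> = (M * 4 powr e * r0 powr e) * (2 powr (e - 1))^k"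
    unfolding d f by (simp only: mult_ac)
  finally show ?thesis .
qed

lemma dyadic_sums:
  fixes e r0 M :: real assumes r0: "0 < r0" and e: "e < 1"
  shows "(\<lambda>k. (1/2)^k * (M * (2 * (2^(k+1) * r0)) powr e)) sums (M * 4 powr e * r0 powr e / (1 - 2 powr (e - 1)))"
proof -
  have q: "norm (2 powr (e - 1) :: real) < 1"
    using e by (simp add: powr_less_one)
  have "(\<lambda>k. (M * 4 powr e * r0 powr e) * (2 powr (e - 1))^k) sums ((M * 4 powr e * r0 powr e) * (1 / (1 - 2 powr (e - 1))))"
    by (intro sums_mult geometric_sums q)
  moreover have "(\<lambda>k. (1/2)^k * (M * (2 * (2^(k+1) * r0)) powr e)) = (\<lambda>k. (M * 4 powr e * r0 powr e) * (2 powr (e - 1))^k)"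
    by (rule ext, rule dyadic_term[OF r0])
  ultimately show ?thesis
    by simp
qed




lemma ennreal_le_suminf: "(f k :: ennreal) \<le> suminf f"
  using sum_le_suminf[OF summableI, of "{k}" f] by simp

lemma least_dyadic:
  fixes x r0 :: real assumes r0: "0 < r0" and x: "r0 \<le> x"
  obtains k where "x \<le> 2^(k+1) * r0" "r0 / x \<le> (1/2)^k"
proof -
  obtain n where n: "x / r0 < 2^n" using real_arch_pow[of 2 "x / r0"] by auto
  have "x \<le> 2^(n+1) * r0"
  proof -
    have "x < 2^n * r0" using n r0 by (simp add: divide_less_eq)
    also have "\<dots> \<le> 2^(n+1) * r0" using r0 by (intro mult_right_mono) auto
    finally show ?thesis by simp
  qed
  then have ex: "\<exists>n. x \<le> 2^(n+1) * r0" by blast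
  define k where "k = (LEAST n. x \<le> 2^(n+1) * r0)"
  have Pk: "x \<le> 2^(k+1) * r0" unfolding k_def by (rule LeastI_ex[OF ex])
  have xpos: "x > 0" using r0 x by simp
  have "r0 / x \<le> (1/2)^k"
  proof (cases k)
    case 0
    then show ?thesis using x xpos by simp
  next
    case (Suc j)
    have "j < k" using Suc by simp
    then have "\<not> x \<le> 2^(j+1) * r0"
      unfolding k_def by (rule not_less_Least)
    then have "2^k * r0 < x" using Suc by simp
    then have "r0 / x \<le> r0 / (2^k * r0)"
      using r0 xpos by (intro divide_left_mono) auto
    also have "\<dots> = (1/2)^k" using r0 by (simp add: power_one_over)
    finally show ?thesis .
  qed
  with Pk show ?thesis by (rule that)
qed

lemma dyadic_E:
  fixes g :: "real \<Rightarrow> complex"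
  assumes g: "valid_path g" "pathstart g = p" "pathfinish g = q"
    and rho: "rho \<in> borel_measurable borel" "\<And>w. 0 \<le> rho w"
    and gl: "conf_length rho g < conf_dist rho p q + d"
    and line: "\<And>x y. conf_length rho (linepath x y) \<le> ennreal (M * norm (y - x) powr e)"
    and M: "0 \<le> M" and e: "0 < e" "e < 1" and r0: "0 < r0"
  shows "(\<integral>\<^sup>+t. ennreal (sqrt (rho (g t)) * norm (vector_derivative g (at t)) * (if r0 \<le> norm (g t) then r0 / norm (g t) else 0)) * indicator {0..1} t \<partial>lborel)
     \<le> ennreal (M * 4 powr e * r0 powr e / (1 - 2 powr (e - 1))) + 2 * d"
proof -
  define X where "X t = sqrt (rho (g t)) * norm (vector_derivative g (at t))" for t
  have X0: "X t \<ge> 0" for t using rho(2) by (simp add: X_def)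
  define S where "S k = {t\<in>{0..1}. norm (g t) \<le> 2^(k+1) * r0}" for k :: nat
  define c where "c k = ennreal ((1/2)^k)" for k :: nat
  have step1: "(\<integral>\<^sup>+t. ennreal (X t * (if r0 \<le> norm (g t) then r0 / norm (g t) else 0)) * indicator {0..1} t \<partial>lborel)
     \<le> (\<integral>\<^sup>+t. (\<Sum>k. c k * (ennreal (X t) * indicator (S k) t)) \<partial>lborel)"
  proof (rule nn_integral_mono)
    fix t
    show "ennreal (X t * (if r0 \<le> norm (g t) then r0 / norm (g t) else 0)) * indicator {0..1} t
        \<le> (\<Sum>k. c k * (ennreal (X t) * indicator (S k) t))"
    proof (cases "t \<in> {0..1} \<and> r0 \<le> norm (g t)")
      case False then show ?thesis by (auto simp: indicator_def)
    next
      case True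
      then obtain k where k: "norm (g t) \<le> 2^(k+1) * r0" "r0 / norm (g t) \<le> (1/2)^k"
        using least_dyadic[OF r0] by blast
      have tS: "t \<in> S k" using True k by (simp add: S_def)
      have "ennreal (X t * (if r0 \<le> norm (g t) then r0 / norm (g t) else 0)) * indicator {0..1} t
          = ennreal (X t * (r0 / norm (g t)))" using True by simp
      also have "\<dots> \<le> ennreal (X t * (1/2)^k)"
        using k X0 by (intro ennreal_leI mult_left_mono) auto
      also have "\<dots> = c k * (ennreal (X t) * indicator (S k) t)"
        using tS X0 by (simp add: c_def ennreal_mult mult.commute)
      also have "\<dots> \<le> (\<Sum>k. c k * (ennreal (X t) * indicator (S k) t))"
        by (rule ennreal_le_suminf)
      finally show ?thesis .
    qed
  qed
  obtain F G where FG: "F \<in> borel_measurable borel" "G \<in> borel_measurable borel"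
    "\<And>t. t\<in>{0..1} \<Longrightarrow> G t = g t"
    "\<And>S. S \<subseteq> {0..1} \<Longrightarrow> AE t in lborel. ennreal (sqrt (rho (g t)) * norm (vector_derivative g (at t))) * indicator S t = F t * indicator S t"
    using Ls_meas[OF g(1) rho(1)] by blast
  have SG: "S k = {t\<in>{0..1}. norm (G t) \<le> 2^(k+1) * r0}" for k
    using FG(3) by (auto simp: S_def)
  have Sm: "S k \<in> sets borel" for k
    unfolding SG using FG(2) by measurable
  have Ssub: "S k \<subseteq> {0..1}" for k by (auto simp: S_def)
  have LF: "Ls rho g (S k) = (\<integral>\<^sup>+t. F t * indicator (S k) t \<partial>lborel)" for k
    unfolding Ls_def by (rule nn_integral_cong_AE) (rule FG(4)[OF Ssub])
  have AEall: "AE t in lborel. \<forall>k. ennreal (X t) * indicator (S k) t = F t * indicator (S k) t"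
    unfolding AE_all_countable X_def using FG(4)[OF Ssub] by blast
  have step2: "(\<integral>\<^sup>+t. (\<Sum>k. c k * (ennreal (X t) * indicator (S k) t)) \<partial>lborel) = (\<Sum>k. c k * Ls rho g (S k))"
  proof -
    have "(\<integral>\<^sup>+t. (\<Sum>k. c k * (ennreal (X t) * indicator (S k) t)) \<partial>lborel)
        = (\<integral>\<^sup>+t. (\<Sum>k. c k * (F t * indicator (S k) t)) \<partial>lborel)"
      by (rule nn_integral_cong_AE) (use AEall in \<open>eventually_elim, simp\<close>)
    also have "\<dots> = (\<Sum>k. (\<integral>\<^sup>+t. c k * (F t * indicator (S k) t) \<partial>lborel))"
      by (rule nn_integral_suminf) (use FG(1) Sm in measurable)
    also have "\<dots> = (\<Sum>k. c k * (\<integral>\<^sup>+t. F t * indicator (S k) t \<partial>lborel))"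
      by (intro suminf_cong nn_integral_cmult) (use FG(1) Sm in measurable)
    finally show ?thesis by (simp add: LF)
  qed
  have step3: "Ls rho g (S k) \<le> ennreal (M * (2 * (2^(k+1) * r0)) powr e) + d" for k
    unfolding S_def by (rule near_min_ball[OF g rho gl line M]) (use e r0 in auto)
  have step4: "(\<Sum>k. c k * Ls rho g (S k)) \<le> (\<Sum>k. c k * (ennreal (M * (2 * (2^(k+1) * r0)) powr e) + d))"
    by (intro suminf_le summableI mult_left_mono step3) auto
  have sA: "(\<Sum>k. ennreal ((1/2)^k * (M * (2 * (2^(k+1) * r0)) powr e))) = ennreal (M * 4 powr e * r0 powr e / (1 - 2 powr (e - 1)))"
    by (rule suminf_ennreal_eq) (use M dyadic_sums[OF r0 e(2), of M] in auto)
  have sB: "(\<Sum>k. c k) = 2"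
  proof -
    have "(\<lambda>k. ((1::real)/2)^k) sums (1 / (1 - 1/2))" by (rule geometric_sums) simp
    then have "(\<Sum>k. c k) = ennreal (1 / (1 - 1/2))"
      unfolding c_def by (intro suminf_ennreal_eq) auto
    then show ?thesis by simp
  qed
  have "(\<Sum>k. c k * (ennreal (M * (2 * (2^(k+1) * r0)) powr e) + d))
      = (\<Sum>k. ennreal ((1/2)^k * (M * (2 * (2^(k+1) * r0)) powr e)) + c k * d)"
    by (intro suminf_cong) (simp add: c_def distrib_left ennreal_mult M)
  also have "\<dots> = (\<Sum>k. ennreal ((1/2)^k * (M * (2 * (2^(k+1) * r0)) powr e))) + (\<Sum>k. c k * d)"
    by (rule suminf_add[symmetric]) (auto intro: summableI)
  also have "(\<Sum>k. c k * d) = 2 * d"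
    using sB by (simp add: ennreal_suminf_multc[symmetric])
  finally have step5: "(\<Sum>k. c k * (ennreal (M * (2 * (2^(k+1) * r0)) powr e) + d))
      = ennreal (M * 4 powr e * r0 powr e / (1 - 2 powr (e - 1))) + 2 * d"
    using sA by simp
  show ?thesis
    using step1 step2 step4 step5 by (simp add: X_def)
qed



lemma nn_integral_add_AE:
  assumes "AE x in M. f x = f' x" "AE x in M. h x = h' x"
    "f' \<in> borel_measurable M" "h' \<in> borel_measurable M"
  shows "(\<integral>\<^sup>+x. f x + h x \<partial>M) = integral\<^sup>N M f + integral\<^sup>N M h"
proof -
  have "(\<integral>\<^sup>+x. f x + h x \<partial>M) = (\<integral>\<^sup>+x. f' x + h' x \<partial>M)"
    by (rule nn_integral_cong_AE) (use assms(1,2) in \<open>eventually_elim, simp\<close>)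
  also have "\<dots> = integral\<^sup>N M f' + integral\<^sup>N M h'"
    by (rule nn_integral_add[OF assms(3,4)])
  also have "integral\<^sup>N M f' = integral\<^sup>N M f"
    by (rule nn_integral_cong_AE) (use assms(1) in \<open>eventually_elim, simp\<close>)
  also have "integral\<^sup>N M h' = integral\<^sup>N M h"
    by (rule nn_integral_cong_AE) (use assms(2) in \<open>eventually_elim, simp\<close>)
  finally show ?thesis .
qed

lemma nn_integral_cmult_AE:
  assumes "AE x in M. f x = f' x" "f' \<in> borel_measurable M"
  shows "(\<integral>\<^sup>+x. c * f x \<partial>M) = c * integral\<^sup>N M f"
proof -
  have "(\<integral>\<^sup>+x. c * f x \<partial>M) = (\<integral>\<^sup>+x. c * f' x \<partial>M)"
    by (rule nn_integral_cong_AE) (use assms(1) in \<open>eventually_elim, simp\<close>)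
  also have "\<dots> = c * integral\<^sup>N M f'"
    by (rule nn_integral_cmult[OF assms(2)])
  also have "integral\<^sup>N M f' = integral\<^sup>N M f"
    by (rule nn_integral_cong_AE) (use assms(1) in \<open>eventually_elim, simp\<close>)
  finally show ?thesis .
qed

lemma ratio_Ls:
  fixes g :: "real \<Rightarrow> complex"
  assumes g: "valid_path g"
    and rho1: "rho1 \<in> borel_measurable borel" "\<And>w. 0 \<le> rho1 w"
    and rho2: "\<And>w. 0 \<le> rho2 w"
    and r0: "0 < r0" and c: "0 \<le> c"
    and ratio: "\<And>w. r0 \<le> norm w \<Longrightarrow> sqrt (rho2 w) \<le> sqrt (rho1 w) * (1 + c * r0 / norm w)"
    and U: "U \<subseteq> {t\<in>{0..1}. r0 \<le> norm (g t)}" and Um: "U \<in> sets borel"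
  shows "Ls rho2 g U \<le> Ls rho1 g U + ennreal c *
     (\<integral>\<^sup>+t. ennreal (sqrt (rho1 (g t)) * norm (vector_derivative g (at t)) * (if r0 \<le> norm (g t) then r0 / norm (g t) else 0)) * indicator {0..1} t \<partial>lborel)"
proof -
  define X1 where "X1 t = sqrt (rho1 (g t)) * norm (vector_derivative g (at t))" for t
  define w where "w t = (if r0 \<le> norm (g t) then r0 / norm (g t) else 0)" for t
  have X1: "X1 t \<ge> 0" for t using rho1(2) by (simp add: X1_def)
  have w0: "w t \<ge> 0" for t using r0 by (simp add: w_def)
  obtain F G where FG: "F \<in> borel_measurable borel" "G \<in> borel_measurable borel"
    "\<And>t. t\<in>{0..1} \<Longrightarrow> G t = g t"
    "\<And>S. S \<subseteq> {0..1} \<Longrightarrow> AE t in lborel. ennreal (sqrt (rho1 (g t)) * norm (vector_derivative g (at t))) * indicator S t = F t * indicator S t"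
    using Ls_meas[OF g rho1(1)] by blast
  define W where "W t = (if r0 \<le> norm (G t) then r0 / norm (G t) else 0)" for t
  have Wm: "W \<in> borel_measurable borel" unfolding W_def using FG(2) by measurable
  have U01: "U \<subseteq> {0..1}" using U by auto
  have AE1: "AE t in lborel. ennreal (X1 t) * indicator U t = F t * indicator U t"
    using FG(4)[OF U01] by (simp add: X1_def)
  have AE2: "AE t in lborel. ennreal (X1 t * w t) * indicator {0..1} t = F t * ennreal (W t) * indicator {0..1} t"
    using FG(4)[OF order_refl]
  proof eventually_elim
    case (elim t)
    show ?case
    proof (cases "t \<in> {0..1}")
      case True
      then have a: "ennreal (X1 t) = F t" using elim by (simp add: X1_def)
      have b: "w t = W t" using True FG(3) by (simp add: w_def W_def)
      have "ennreal (X1 t * w t) = ennreal (X1 t) * ennreal (w t)"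
        using X1[of t] w0[of t] by (simp add: ennreal_mult)
      then show ?thesis using True a b by simp
    qed simp
  qed
  have pw: "ennreal (sqrt (rho2 (g t)) * norm (vector_derivative g (at t))) * indicator U t
      \<le> ennreal (X1 t) * indicator U t + ennreal c * (ennreal (X1 t * w t) * indicator {0..1} t)" for t
  proof (cases "t \<in> U")
    case True
    then have t01: "t \<in> {0..1}" and tr: "r0 \<le> norm (g t)" using U by auto
    have "sqrt (rho2 (g t)) * norm (vector_derivative g (at t))
        \<le> sqrt (rho1 (g t)) * (1 + c * r0 / norm (g t)) * norm (vector_derivative g (at t))"
      by (intro mult_right_mono ratio tr) auto
    also have "\<dots> = X1 t + c * (X1 t * w t)"
      using tr by (simp add: X1_def w_def algebra_simps)
    finally have "ennreal (sqrt (rho2 (g t)) * norm (vector_derivative g (at t))) \<le> ennreal (X1 t + c * (X1 t * w t))"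
      by (rule ennreal_leI)
    also have "\<dots> = ennreal (X1 t) + ennreal c * ennreal (X1 t * w t)"
    proof -
      have "0 \<le> X1 t * w t" using X1[of t] w0[of t] by simp
      then have "ennreal (X1 t + c * (X1 t * w t)) = ennreal (X1 t) + ennreal (c * (X1 t * w t))"
        using X1[of t] c by (intro ennreal_plus) auto
      also have "ennreal (c * (X1 t * w t)) = ennreal c * ennreal (X1 t * w t)"
        using c \<open>0 \<le> X1 t * w t\<close> by (rule ennreal_mult)
      finally show ?thesis .
    qed
    finally show ?thesis using True t01 by simp
  qed simp
  have "Ls rho2 g U \<le> (\<integral>\<^sup>+t. ennreal (X1 t) * indicator U t + ennreal c * (ennreal (X1 t * w t) * indicator {0..1} t) \<partial>lborel)"
    unfolding Ls_def by (rule nn_integral_mono) (rule pw)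
  also have "\<dots> = (\<integral>\<^sup>+t. ennreal (X1 t) * indicator U t \<partial>lborel) + (\<integral>\<^sup>+t. ennreal c * (ennreal (X1 t * w t) * indicator {0..1} t) \<partial>lborel)"
  proof (rule nn_integral_add_AE[OF AE1])
    show "AE t in lborel. ennreal c * (ennreal (X1 t * w t) * indicator {0..1} t) = ennreal c * (F t * ennreal (W t) * indicator {0..1} t)"
      using AE2 by eventually_elim simp
    show "(\<lambda>t. F t * indicator U t) \<in> borel_measurable lborel"
      using FG(1) Um by measurable
    show "(\<lambda>t. ennreal c * (F t * ennreal (W t) * indicator {0..1} t)) \<in> borel_measurable lborel"
      using FG(1) Wm by measurable
  qed
  also have "(\<integral>\<^sup>+t. ennreal c * (ennreal (X1 t * w t) * indicator {0..1} t) \<partial>lborel)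
      = ennreal c * (\<integral>\<^sup>+t. ennreal (X1 t * w t) * indicator {0..1} t \<partial>lborel)"
    by (rule nn_integral_cmult_AE[OF AE2]) (use FG(1) Wm in measurable)
  finally show ?thesis
    by (simp add: Ls_def X1_def w_def)
qed




definition Kc :: "real \<Rightarrow> real \<Rightarrow> real \<Rightarrow> real" where
  "Kc M c e = 1 + M * 2 powr e + c * (M * 4 powr e / (1 - 2 powr (e - 1)) + 2)"

lemma compare:
  fixes rho1 rho2 :: "complex \<Rightarrow> real" and p q :: complex
  assumes rho1: "rho1 \<in> borel_measurable borel" "\<And>w. 0 \<le> rho1 w"
    and rho2: "rho2 \<in> borel_measurable borel" "\<And>w. 0 \<le> rho2 w"
    and e: "0 < e" "e < 1" and r0: "0 < r0" and c: "0 \<le> c" and M: "0 \<le> M"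
    and ratio: "\<And>w. r0 \<le> norm w \<Longrightarrow> sqrt (rho2 w) \<le> sqrt (rho1 w) * (1 + c * r0 / norm w)"
    and line1: "\<And>x y. conf_length rho1 (linepath x y) \<le> ennreal (M * norm (y - x) powr e)"
    and line2: "\<And>x y. conf_length rho2 (linepath x y) \<le> ennreal (M * norm (y - x) powr e)"
  shows "conf_dist rho2 p q \<le> conf_dist rho1 p q + ennreal (Kc M c e * r0 powr e)"
proof -
  define d where "d = ennreal (r0 powr e)"
  have dpos: "0 < d" using r0 by (simp add: d_def)
  have "conf_dist rho1 p q \<le> conf_length rho1 (linepath p q)"
    by (rule conf_dist_le_length) auto
  also have "\<dots> < \<infinity>" using line1[of p q] by (simp add: order_le_less_trans)
  finally have fin: "conf_dist rho1 p q \<noteq> \<infinity>" by simp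
  have "conf_dist rho1 p q + 0 < conf_dist rho1 p q + d"
    using fin dpos by (simp only: ennreal_add_left_cancel_less) simp
  then have "conf_dist rho1 p q < conf_dist rho1 p q + d" by simp
  then obtain g where g: "valid_path g" "pathstart g = p" "pathfinish g = q"
    and gl: "conf_length rho1 g < conf_dist rho1 p q + d"
    unfolding conf_dist_def[of rho1 p q] by (auto simp: INF_less_iff conf_dist_def)
  define E where "E = (\<integral>\<^sup>+t. ennreal (sqrt (rho1 (g t)) * norm (vector_derivative g (at t)) * (if r0 \<le> norm (g t) then r0 / norm (g t) else 0)) * indicator {0..1} t \<partial>lborel)"
  define B where "B = M * 4 powr e * r0 powr e / (1 - 2 powr (e - 1))"
  have q1: "2 powr (e - 1) < (1::real)" using e by (simp add: powr_less_one)
  have B0: "0 \<le> B" using M q1 by (simp add: B_def)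
  have Eb: "E \<le> ennreal B + 2 * d"
    unfolding E_def B_def by (rule dyadic_E[OF g rho1 gl line1 M e r0])
  have L1g: "conf_length rho1 g \<le> conf_dist rho1 p q + d" using gl by simp
  have main: "conf_dist rho2 p q \<le> conf_length rho1 g + ennreal c * E + ennreal (M * 2 powr e * r0 powr e)"
  proof (cases "\<exists>t\<in>{0..1}. norm (g t) \<le> r0")
    case False
    have "conf_dist rho2 p q \<le> conf_length rho2 g"
      by (rule conf_dist_le_length[OF g])
    also have "\<dots> = Ls rho2 g {0..1}" by (rule conf_length_Ls)
    also have "\<dots> \<le> Ls rho1 g {0..1} + ennreal c * E"
      unfolding E_def
      by (rule ratio_Ls[OF g(1) rho1 rho2(2) r0 c ratio]) (use False in auto)
    also have "\<dots> \<le> conf_length rho1 g + ennreal c * E + ennreal (M * 2 powr e * r0 powr e)"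
      by (simp add: conf_length_Ls)
    finally show ?thesis .
  next
    case True
    show ?thesis
    proof (rule ext_times[OF g(1) True])
      fix t1 t2 assume t: "0 \<le> t1" "t1 \<le> t2" "t2 \<le> 1" "norm (g t1) \<le> r0" "norm (g t2) \<le> r0"
        "{t\<in>{0..1}. norm (g t) \<le> r0} \<subseteq> {t1..t2}"
        "\<And>t. t \<in> {0..1} \<Longrightarrow> t < t1 \<Longrightarrow> norm (g t) > r0"
        "\<And>t. t \<in> {0..1} \<Longrightarrow> t2 < t \<Longrightarrow> norm (g t) > r0"
      define U where "U = {0..<t1} \<union> {t2<..1}"
      have "conf_dist rho2 p q \<le> Ls rho2 g {0..t1} + conf_length rho2 (linepath (g t1) (g t2)) + Ls rho2 g {t2..1}"
        by (rule conf_dist_surgery[OF g t(1-3) _ _ _ rho2]) auto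
      also have "Ls rho2 g {0..t1} = Ls rho2 g {0..<t1}"
        by (rule Ls_cong_AE) (use AE_neq_real[of t1] in \<open>eventually_elim, auto\<close>)
      also have "Ls rho2 g {t2..1} = Ls rho2 g {t2<..1}"
        by (rule Ls_cong_AE) (use AE_neq_real[of t2] in \<open>eventually_elim, auto\<close>)
      also have "Ls rho2 g {0..<t1} + conf_length rho2 (linepath (g t1) (g t2)) + Ls rho2 g {t2<..1}
          = (Ls rho2 g {0..<t1} + Ls rho2 g {t2<..1}) + conf_length rho2 (linepath (g t1) (g t2))"
        by (simp add: ac_simps)
      also have "Ls rho2 g {0..<t1} + Ls rho2 g {t2<..1} = Ls rho2 g U"
        unfolding U_def by (rule Ls_union[OF g(1) rho2(1), symmetric]) (use t(1-3) in auto)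
      also have "Ls rho2 g U \<le> Ls rho1 g U + ennreal c * E"
        unfolding E_def
      proof (rule ratio_Ls[OF g(1) rho1 rho2(2) r0 c ratio])
        show "U \<subseteq> {t \<in> {0..1}. r0 \<le> norm (g t)}"
        proof
          fix x assume x: "x \<in> U"
          then have x01: "x \<in> {0..1}" using t(1-3) by (auto simp: U_def)
          have "x < t1 \<or> t2 < x" using x by (auto simp: U_def)
          then have "norm (g x) > r0" using t(7)[OF x01] t(8)[OF x01] by blast
          then show "x \<in> {t \<in> {0..1}. r0 \<le> norm (g t)}" using x01 by simp
        qed
        show "U \<in> sets borel" unfolding U_def by measurable
      qed
      also have "Ls rho1 g U \<le> conf_length rho1 g"
        unfolding conf_length_Ls U_def by (rule Ls_mono) (use t(1-3) in auto)
      also have "conf_length rho2 (linepath (g t1) (g t2)) \<le> ennreal (M * 2 powr e * r0 powr e)"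
      proof -
        have "norm (g t2 - g t1) \<le> 2 * r0"
          using norm_triangle_ineq4[of "g t2" "g t1"] t(4,5) by linarith
        then have "M * norm (g t2 - g t1) powr e \<le> M * (2 * r0) powr e"
          using M e by (intro mult_left_mono powr_mono2) auto
        also have "\<dots> = M * 2 powr e * r0 powr e" using r0 by (simp add: powr_mult)
        finally show ?thesis using line2[of "g t1" "g t2"] by (meson ennreal_leI order_trans)
      qed
      finally show ?thesis by (simp add: add_mono)
    qed
  qed
  also have "\<dots> \<le> (conf_dist rho1 p q + d) + ennreal c * (ennreal B + 2 * d) + ennreal (M * 2 powr e * r0 powr e)"
    by (intro add_mono mult_left_mono L1g Eb) auto
  also have "\<dots> = conf_dist rho1 p q + ennreal (Kc M c e * r0 powr e)"
  proof -
    have r: "0 \<le> r0 powr e" by simp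
    have "d + ennreal c * (ennreal B + 2 * d) + ennreal (M * 2 powr e * r0 powr e)
        = ennreal (r0 powr e + c * (B + 2 * r0 powr e) + M * 2 powr e * r0 powr e)"
    proof -
      have h1: "ennreal B + 2 * d = ennreal (B + 2 * r0 powr e)"
        using B0 r by (simp add: d_def ennreal_mult)
      have h2: "ennreal c * ennreal (B + 2 * r0 powr e) = ennreal (c * (B + 2 * r0 powr e))"
        by (rule ennreal_mult[symmetric]) (use c B0 r in auto)
      have h3: "0 \<le> c * (B + 2 * r0 powr e)" "0 \<le> M * 2 powr e * r0 powr e"
        using c B0 r M by auto
      show ?thesis unfolding h1 h2 using h3 r by (simp add: d_def)
    qed
    also have "r0 powr e + c * (B + 2 * r0 powr e) + M * 2 powr e * r0 powr e = Kc M c e * r0 powr e"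
      using q1 by (simp add: Kc_def B_def field_simps)
    finally show ?thesis by (simp add: ac_simps)
  qed
  finally show ?thesis .
qed





lemma enn_diff_bound:
  fixes x y :: ennreal and k :: real
  assumes "x < \<infinity>" "y < \<infinity>" "0 \<le> k" "x \<le> y + ennreal k" "y \<le> x + ennreal k"
  shows "\<bar>enn2real x - enn2real y\<bar> \<le> k"
proof -
  obtain a where a: "x = ennreal a" "0 \<le> a" using assms(1) ennreal_cases[of x] by auto
  obtain b where b: "y = ennreal b" "0 \<le> b" using assms(2) ennreal_cases[of y] by auto
  have "ennreal a \<le> ennreal (b + k)" using assms(4) unfolding a(1) b(1) ennreal_plus[OF b(2) assms(3)] .
  then have 1: "a \<le> b + k" using b(2) assms(3) by (metis ennreal_le_iff add_nonneg_nonneg)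
  have "ennreal b \<le> ennreal (a + k)" using assms(5) unfolding a(1) b(1) ennreal_plus[OF a(2) assms(3)] .
  then have 2: "b \<le> a + k" using a(2) assms(3) by (metis ennreal_le_iff add_nonneg_nonneg)
  show ?thesis using 1 2 a b by simp
qed

lemma cone_nonneg: "0 \<le> cone_density g w"
  by (simp add: cone_density_def)

lemma omegaF_nonneg: "0 \<le> omegaF_density b2 b3 a2 a3 m w"
  by (simp add: omegaF_density_def)

lemma cone_meas0: "cone_density g \<in> borel_measurable borel"
  unfolding cone_density_def by measurable

lemma line_cone0:
  assumes "0 < g" "g < 1"
  shows "conf_length (cone_density g) (linepath x y) \<le> ennreal (6 * norm (y - x) powr g)"
proof -
  have "conf_length (cone_density g) (linepath x y) = conf_length (\<lambda>w. cone_density g (w - 0)) (linepath x y)"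
    by simp
  also have "\<dots> \<le> ennreal (3 * norm (y - x) powr g)" by (rule line_cone[OF assms])
  also have "\<dots> \<le> ennreal (6 * norm (y - x) powr g)" by (intro ennreal_leI mult_right_mono) auto
  finally show ?thesis .
qed

theorem lemma3p8:
  fixes \<beta>2 \<beta>3 :: real and a2 a3 :: complex and K :: "complex set"
  assumes "0 < \<beta>2" "\<beta>2 < 1" "0 < \<beta>3" "\<beta>3 < 1"
    and "\<beta>2 + \<beta>3 - 1 > 0"
    and "a2 \<noteq> a3"
    and "compact K"
  shows "\<exists>C>0. \<forall>p\<in>K. \<forall>q\<in>K. \<forall>\<mu>::complex. 0 < norm \<mu> \<and> norm \<mu> < 1 \<longrightarrow>
           conf_dist (omegaF_density \<beta>2 \<beta>3 a2 a3 \<mu>) p q < \<infinity> \<and>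
           conf_dist (cone_density (\<beta>2 + \<beta>3 - 1)) p q < \<infinity> \<and>
           \<bar>enn2real (conf_dist (omegaF_density \<beta>2 \<beta>3 a2 a3 \<mu>) p q)
             - enn2real (conf_dist (cone_density (\<beta>2 + \<beta>3 - 1)) p q)\<bar>
             \<le> C * norm \<mu> powr (\<beta>2 + \<beta>3 - 1)"
proof -
  define g where "g = \<beta>2 + \<beta>3 - 1"
  have g: "0 < g" "g < 1" using assms(1-5) by (auto simp: g_def)
  define A where "A = max (norm a2) (norm a3) + 1"
  have m: "0 \<le> max (norm a2) (norm a3)" by (simp add: le_max_iff_disj)
  have A0: "0 < A" unfolding A_def using m by linarith
  have A: "norm a2 \<le> A" "norm a3 \<le> A" "0 < A"
    using A0 unfolding A_def by (auto simp: le_max_iff_disj)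
  define K0 where "K0 = Kc 6 3 g"
  have q1: "2 powr (g - 1) < (1::real)" using g by (simp add: powr_less_one)
  have K0: "0 \<le> K0" using q1 by (simp add: K0_def Kc_def)
  define C where "C = K0 * (2 * A) powr g + 1"
  have "0 \<le> K0 * (2 * A) powr g" using K0 by simp
  then have Cpos: "C > 0" unfolding C_def by linarith
  have bet: "0 < \<beta>2" "\<beta>2 < 1" "0 < \<beta>3" "\<beta>3 < 1" "0 < \<beta>2 + \<beta>3 - 1" using assms by auto
  show ?thesis
  proof (intro exI[of _ C] conjI Cpos ballI allI impI)
    fix p q \<mu> :: complex
    assume \<mu>: "0 < norm \<mu> \<and> norm \<mu> < 1"
    define rF where "rF = omegaF_density \<beta>2 \<beta>3 a2 a3 \<mu>"
    define rC where "rC = cone_density g"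
    define r0 where "r0 = 2 * A * norm \<mu>"
    have r0: "0 < r0" using A \<mu> by (simp add: r0_def)
    have lineF: "conf_length rF (linepath x y) \<le> ennreal (6 * norm (y - x) powr g)" for x y
      unfolding rF_def g_def by (rule line_F) (use bet in auto)
    have lineC: "conf_length rC (linepath x y) \<le> ennreal (6 * norm (y - x) powr g)" for x y
      unfolding rC_def by (rule line_cone0[OF g])
    have ratio1: "sqrt (rF w) \<le> sqrt (rC w) * (1 + 3 * r0 / norm w)" if "r0 \<le> norm w" for w
      using ratio_FC(1)[OF bet A(1-3), of \<mu> w] \<mu> that by (simp add: rF_def rC_def g_def r0_def)
    have ratio2: "sqrt (rC w) \<le> sqrt (rF w) * (1 + 3 * r0 / norm w)" if "r0 \<le> norm w" for w
      using ratio_FC(2)[OF bet A(1-3), of \<mu> w] \<mu> that by (simp add: rF_def rC_def g_def r0_def)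
    have mF: "rF \<in> borel_measurable borel" unfolding rF_def by (rule omegaF_meas)
    have mC: "rC \<in> borel_measurable borel" unfolding rC_def by (rule cone_meas0)
    have nF: "0 \<le> rF w" for w unfolding rF_def by (rule omegaF_nonneg)
    have nC: "0 \<le> rC w" for w unfolding rC_def by (rule cone_nonneg)
    have d1: "conf_dist rF p q \<le> conf_dist rC p q + ennreal (K0 * r0 powr g)"
      unfolding K0_def by (rule compare[OF mC nC mF nF g r0 _ _ ratio1 lineC lineF]) auto
    have d2: "conf_dist rC p q \<le> conf_dist rF p q + ennreal (K0 * r0 powr g)"
      unfolding K0_def by (rule compare[OF mF nF mC nC g r0 _ _ ratio2 lineF lineC]) auto
    have fF: "conf_dist rF p q < \<infinity>"
    proof -
      have "conf_dist rF p q \<le> ennreal (6 * norm (q - p) powr g)"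
        using conf_dist_le_length[of "linepath p q" p q rF] lineF[of p q] by auto
      then show ?thesis using ennreal_less_top[of "6 * norm (q - p) powr g"] unfolding infinity_ennreal_def by (meson le_less_trans)
    qed
    have fC: "conf_dist rC p q < \<infinity>"
    proof -
      have "conf_dist rC p q \<le> ennreal (6 * norm (q - p) powr g)"
        using conf_dist_le_length[of "linepath p q" p q rC] lineC[of p q] by auto
      then show ?thesis using ennreal_less_top[of "6 * norm (q - p) powr g"] unfolding infinity_ennreal_def by (meson le_less_trans)
    qed
    have "\<bar>enn2real (conf_dist rF p q) - enn2real (conf_dist rC p q)\<bar> \<le> K0 * r0 powr g"
      by (rule enn_diff_bound[OF fF fC _ d1 d2]) (use K0 in simp)
    also have "K0 * r0 powr g = K0 * (2 * A) powr g * norm \<mu> powr g"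
      using A \<mu> by (simp add: r0_def powr_mult)
    also have "\<dots> \<le> C * norm \<mu> powr g"
      by (intro mult_right_mono) (auto simp: C_def)
    finally show "\<bar>enn2real (conf_dist (omegaF_density \<beta>2 \<beta>3 a2 a3 \<mu>) p q)
             - enn2real (conf_dist (cone_density (\<beta>2 + \<beta>3 - 1)) p q)\<bar>
             \<le> C * norm \<mu> powr (\<beta>2 + \<beta>3 - 1)"
      by (simp add: rF_def rC_def g_def)
    show "conf_dist (omegaF_density \<beta>2 \<beta>3 a2 a3 \<mu>) p q < \<infinity>" using fF by (simp add: rF_def)
    show "conf_dist (cone_density (\<beta>2 + \<beta>3 - 1)) p q < \<infinity>" using fC by (simp add: rC_def g_def)
  qed
qed


end
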